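(* Fix $\mathbf{s} \in \mathcal{S}$. Then, for any decreasing positive sequence $\{\epsilon_l : l \in \mathbb{N}\}$ with $\lim_{l \to \infty} \epsilon_l = 0$, we have $\lim_{l \to \infty} \bar{\mathbf{p}}^{\epsilon_l}(\mathbf{s}) = \bar{\mathbf{p}}(\mathbf{s})$.
   Context: There are $N$ systems $\mathcal{A} = \{1,\ldots,N\}$. $B = [b_{i,j}]$ is a nonnegative $N\times N$ matrix with $b_{i,j} = \beta_{j,i} \ge 0$, $\beta_{i,i}=0$; the directed graph with an edge $(i,j)$ iff $\beta_{i,j}>0$ is weakly connected (not necessarily strongly connected). $\boldsymbol{\lambda} \in \mathbb{R}_+^N$ is the vector of external attack rates (some entries may be zero), $\boldsymbol{\delta} > \mathbf{0}$ the recovery rates, and $\mathbf{q}(\mathbf{s}) = (q_i(s_i))_i$ the breach probabilities with each $q_i:\mathbb{R}_+\to(0,1]$ decreasing, strictly convex, continuously differentiable; $\mathcal{S}\subset\mathbb{R}_+^N$ is convex. The state evolves by $\dot{\mathbf{p}}(t) = (\mathbf{1} - \mathbf{p}(t)) \circ \mathbf{q}(\mathbf{s}) \circ (\boldsymbol{\lambda} + B \mathbf{p}(t)) - \boldsymbol{\delta} \circ \mathbf{p}(t)$ ($\circ$ elementwise), and for fixed $\mathbf{s}$ this system has a unique stable equilibrium $\bar{\mathbf{p}}(\mathbf{s})$, which satisfies $(\mathbf{1} - \mathbf{p}) \circ (\boldsymbol{\lambda} + B \mathbf{p}) - \mathbf{q}(\mathbf{s})^{-1} \circ \boldsymbol{\delta}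 \circ \mathbf{p} = \mathbf{0}$ (this equation may have multiple solutions). For $\epsilon>0$, $\bar{\mathbf{p}}^{\epsilon}(\mathbf{s}) > \mathbf{0}$ is the unique strictly positive solution of the same equation with $\boldsymbol{\lambda}$ replaced by $\boldsymbol{\lambda}^{\epsilon} := \boldsymbol{\lambda} + \epsilon\mathbf{1}$. *)

theory Defs
  imports "HOL-Analysis.Analysis"
begin

text \<open>Vectors indexed by the finite type 'n (the systems 1..N).
  Matrix B: B $ i $ j = b_{i,j} = beta_{j,i}.\<close>

definition strictly_convex_on :: "real set \<Rightarrow> (real \<Rightarrow> real) \<Rightarrow> bool" where
  "strictly_convex_on A f \<longleftrightarrow>
     (\<forall>x\<in>A. \<forall>y\<in>A. \<forall>u::real. x \<noteq> y \<and> 0 < u \<and> u < 1 \<longrightarrow>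
        f (u * x + (1 - u) * y) < u * f x + (1 - u) * f y)"

definition weakly_connected :: "real^'n^'n \<Rightarrow> bool" where
  "weakly_connected B \<longleftrightarrow>
     (let E = {(i,j). B $ j $ i > 0} in \<forall>i j. (i, j) \<in> (E \<union> E\<inverse>)\<^sup>*)"

definition field ::
  "real^'n^'n \<Rightarrow> real^'n \<Rightarrow> real^'n \<Rightarrow> ('n \<Rightarrow> real \<Rightarrow> real) \<Rightarrow> real^'n \<Rightarrow> real^'n \<Rightarrow> real^'n" where
  "field B lam delta q s p =
     (\<chi> i. (1 - p $ i) * q i (s $ i) * (lam $ i + (B *v p) $ i) - delta $ i * p $ i)"

definition unit_cube :: "(real^'n) set" where
  "unit_cube = {p. \<forall>i. 0 \<le> p $ i \<and> p $ i \<le> 1}"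

definition is_solution :: "(real^'n \<Rightarrow> real^'n) \<Rightarrow> (real \<Rightarrow> real^'n) \<Rightarrow> bool" where
  "is_solution F x \<longleftrightarrow>
     (\<forall>t\<ge>0. (x has_vector_derivative F (x t)) (at t within {0..}))"

definition stable_equilibrium :: "(real^'n \<Rightarrow> real^'n) \<Rightarrow> real^'n \<Rightarrow> bool" where
  "stable_equilibrium F p \<longleftrightarrow>
     p \<in> unit_cube \<and> F p = 0 \<and>
     (\<forall>e>0. \<exists>d>0. \<forall>x. is_solution F x \<and> x 0 \<in> unit_cube \<and> dist (x 0) p < d
                    \<longrightarrow> (\<forall>t\<ge>0. dist (x t) p < e)) \<and>
     (\<exists>d>0. \<forall>x. is_solution F x \<and> x 0 \<in> unit_cube \<and> dist (x 0) p < d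
                 \<longrightarrow> (x \<longlongrightarrow> p) at_top)"

definition pbar :: "real^'n^'n \<Rightarrow> real^'n \<Rightarrow> real^'n \<Rightarrow> ('n \<Rightarrow> real \<Rightarrow> real) \<Rightarrow> real^'n \<Rightarrow> real^'n" where
  "pbar B lam delta q s = (THE p. stable_equilibrium (field B lam delta q s) p)"

definition eq_map ::
  "real^'n^'n \<Rightarrow> real^'n \<Rightarrow> real^'n \<Rightarrow> ('n \<Rightarrow> real \<Rightarrow> real) \<Rightarrow> real^'n \<Rightarrow> real^'n \<Rightarrow> real^'n" where
  "eq_map B lam delta q s p =
     (\<chi> i. (1 - p $ i) * (lam $ i + (B *v p) $ i) - delta $ i / q i (s $ i) * p $ i)"

definition pbar_eps ::
  "real^'n^'n \<Rightarrow> real^'n \<Rightarrow> real^'n \<Rightarrow> ('n \<Rightarrow> real \<Rightarrow> real) \<Rightarrow> real^'n \<Rightarrow> real \<Rightarrow> real^'n" where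
  "pbar_eps B lam delta q s eps =
     (THE p. (\<forall>i. p $ i > 0) \<and> eq_map B (lam + eps *\<^sub>R 1) delta q s p = 0)"

end

theory Submission
  imports Defs
begin


lemma first_exit_T:
  fixes \<phi> \<phi>' :: "'k \<Rightarrow> real \<Rightarrow> real"
  assumes finK: "finite K"
    and deriv: "\<forall>k\<in>K. \<forall>t\<ge>t0. (\<phi> k has_real_derivative \<phi>' k t) (at t within {t0..})"
    and init: "\<forall>k\<in>K. \<phi> k t0 \<le> 0"
    and tight: "\<forall>t. t0 \<le> t \<and> t < T \<longrightarrow> (\<forall>k\<in>K. \<phi> k t \<le> 0) \<longrightarrow> (\<forall>k\<in>K. \<phi> k t = 0 \<longrightarrow> \<phi>' k t < 0)"
  shows "\<forall>t. t0 \<le> t \<and> t \<le> T \<longrightarrow> (\<forall>k\<in>K. \<phi> k t \<le> 0)"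
proof (rule ccontr)
  define S where "S = {t. t \<ge> t0 \<and> t \<le> T \<and> (\<exists>k\<in>K. \<phi> k t > 0)}"
  assume "\<not> ?thesis"
  then have Sne: "S \<noteq> {}" unfolding S_def by force
  have bdd: "bdd_below S" unfolding S_def by (rule bdd_belowI[of _ t0]) auto
  define m where "m = Inf S"
  have mge: "m \<ge> t0" unfolding m_def using Sne by (rule cInf_greatest) (auto simp: S_def)
  have below: "t \<notin> S" if "t < m" for t
    using that cInf_lower[OF _ bdd] unfolding m_def by force
  have cont: "continuous (at t within {t0..}) (\<phi> k)" if "k \<in> K" "t \<ge> t0" for k t
    using deriv that by (meson DERIV_continuous)
  obtain s0 where "s0 \<in> S" using Sne by blast
  hence mleT: "m \<le> T" using cInf_lower[OF _ bdd, of s0] unfolding m_def S_def by auto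
  have atm: "\<phi> k m \<le> 0" if k: "k \<in> K" for k
  proof (rule ccontr)
    assume "\<not> \<phi> k m \<le> 0"
    hence pos: "\<phi> k m > 0" by simp
    show False
    proof (cases "m = t0")
      case True thus False using init k pos by auto
    next
      case False
      hence mg: "m > t0" using mge by simp
      have "\<forall>\<^sub>F t in at m within {t0..}. \<phi> k t > 0"
        using cont[OF k mge] pos unfolding continuous_within
        by (rule order_tendstoD)
      then obtain d where d: "d > 0" "\<And>t. t \<in> {t0..} \<Longrightarrow> t \<noteq> m \<Longrightarrow> dist t m < d \<Longrightarrow> \<phi> k t > 0"
        unfolding eventually_at by blast
      define t where "t = max t0 (m - d/2)"
      have "t < m" "t \<ge> t0" "dist t m < d" using d mg by (auto simp: t_def dist_real_def)
      hence "t \<in> S" using d(2)[of t] k mleT unfolding S_def by auto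
      thus False using below \<open>t < m\<close> by blast
    qed
  qed
  have mnS: "m \<notin> S" using atm unfolding S_def by force
  have mltT: "m < T"
  proof (rule ccontr)
    assume "\<not> m < T"
    hence "m = T" using mleT by simp
    have "s0 \<ge> m" using below[of s0] \<open>s0 \<in> S\<close> by force
    hence "s0 = m" using \<open>s0 \<in> S\<close> \<open>m = T\<close> unfolding S_def by auto
    thus False using mnS \<open>s0 \<in> S\<close> by simp
  qed
  have "\<exists>h>0. \<forall>t. m < t \<and> t < m + h \<longrightarrow> \<phi> k t \<le> 0" if k: "k \<in> K" for k
  proof (cases "\<phi> k m = 0")
    case True
    have "\<phi>' k m < 0" using tight mge mltT atm True k by blast
    from has_real_derivative_neg_dec_right[OF deriv[rule_format, OF k mge] this]
    obtain d where d: "d > 0" "\<And>h. h > 0 \<Longrightarrow> m + h \<in> {t0..} \<Longrightarrow> h < d \<Longrightarrow> \<phi> k (m + h) < \<phi> k m"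
      by blast
    show ?thesis
    proof (intro exI[of _ d] conjI allI impI)
      fix t assume "m < t \<and> t < m + d"
      thus "\<phi> k t \<le> 0" using d(2)[of "t - m"] mge True by auto
    qed (use d in auto)
  next
    case False
    hence neg: "\<phi> k m < 0" using atm k by (simp add: less_le)
    have "\<forall>\<^sub>F t in at m within {t0..}. \<phi> k t < 0"
      using cont[OF k mge] neg unfolding continuous_within
      by (rule order_tendstoD)
    then obtain d where d: "d > 0" "\<And>t. t \<in> {t0..} \<Longrightarrow> t \<noteq> m \<Longrightarrow> dist t m < d \<Longrightarrow> \<phi> k t < 0"
      unfolding eventually_at by blast
    show ?thesis
    proof (intro exI[of _ d] conjI allI impI)
      fix t assume "m < t \<and> t < m + d"
      thus "\<phi> k t \<le> 0" using d(2)[of t] mge by (auto simp: dist_real_def)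
    qed (use d in auto)
  qed
  then obtain hf where hf: "\<And>k. k \<in> K \<Longrightarrow> hf k > 0 \<and> (\<forall>t. m < t \<and> t < m + hf k \<longrightarrow> \<phi> k t \<le> 0)"
    by metis
  define h where "h = (if K = {} then 1 else Min (hf ` K))"
  have hpos: "h > 0" using hf finK by (auto simp: h_def)
  have hle: "h \<le> hf k" if "k \<in> K" for k using that finK by (auto simp: h_def)
  have "m < m + h" using hpos by simp
  then obtain s where s: "s \<in> S" "s < m + h" using cInf_lessD[OF Sne] unfolding m_def by blast
  have "s \<ge> m" using below[of s] s by force
  then obtain k where k: "k \<in> K" "\<phi> k s > 0" using s unfolding S_def by auto
  show False
  proof (cases "s = m")
    case True thus False using atm k by force
  next
    case False
    hence "m < s" "s < m + hf k" using hle[OF k(1)] \<open>s \<ge> m\<close> s by auto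
    hence "\<phi> k s \<le> 0" using hf[OF k(1)] by blast
    thus False using k by simp
  qed
qed

lemma first_exit:
  fixes \<phi> \<phi>' :: "'k \<Rightarrow> real \<Rightarrow> real"
  assumes finK: "finite K"
    and deriv: "\<forall>k\<in>K. \<forall>t\<ge>t0. (\<phi> k has_real_derivative \<phi>' k t) (at t within {t0..})"
    and init: "\<forall>k\<in>K. \<phi> k t0 \<le> 0"
    and tight: "\<forall>t\<ge>t0. (\<forall>k\<in>K. \<phi> k t \<le> 0) \<longrightarrow> (\<forall>k\<in>K. \<phi> k t = 0 \<longrightarrow> \<phi>' k t < 0)"
  shows "\<forall>t\<ge>t0. \<forall>k\<in>K. \<phi> k t \<le> 0"
proof (intro allI impI)
  fix t assume "t \<ge> t0"
  show "\<forall>k\<in>K. \<phi> k t \<le> 0"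
    using first_exit_T[OF finK deriv init, of "t+1"] tight \<open>t \<ge> t0\<close> by auto
qed

lemma band_down:
  fixes f f' :: "real \<Rightarrow> real"
  assumes deriv: "\<forall>t\<ge>t0. (f has_real_derivative f' t) (at t within {t0..})"
    and inv: "\<forall>t\<ge>t0. f t \<le> U"
    and band: "\<forall>t\<ge>t0. U - \<rho> \<le> f t \<longrightarrow> f' t \<le> - c"
    and rpos: "\<rho> > 0" and cpos: "c > 0"
  shows "\<forall>t\<ge>t0 + 2*\<rho>/c. f t \<le> U - \<rho>"
proof -
  define t1 where "t1 = t0 + 2*\<rho>/c"
  have t1ge: "t1 \<ge> t0" using rpos cpos by (simp add: t1_def)
  have s1: "\<forall>t. t0 \<le> t \<and> t \<le> t1 \<longrightarrow> (\<forall>k\<in>{()}. (\<lambda>k t. f t - (U - (c/2)*(t - t0))) k t \<le> 0)"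
  proof (rule first_exit_T[where \<phi>' = "\<lambda>k t. f' t + c/2"])
    show "\<forall>k\<in>{()}. \<forall>t\<ge>t0. ((\<lambda>t. f t - (U - c / 2 * (t - t0))) has_real_derivative f' t + c / 2) (at t within {t0..})"
      using deriv by (auto intro!: derivative_eq_intros)
    show "\<forall>k\<in>{()}. f t0 - (U - c / 2 * (t0 - t0)) \<le> 0" using inv by auto
    show "\<forall>t. t0 \<le> t \<and> t < t1 \<longrightarrow> (\<forall>k\<in>{()}. f t - (U - c / 2 * (t - t0)) \<le> 0) \<longrightarrow>
        (\<forall>k\<in>{()}. f t - (U - c / 2 * (t - t0)) = 0 \<longrightarrow> f' t + c / 2 < 0)"
    proof (intro allI impI ballI)
      fix t assume t: "t0 \<le> t \<and> t < t1" and eq: "f t - (U - c / 2 * (t - t0)) = 0"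
      have "c/2 * (t - t0) \<le> c/2 * (2*\<rho>/c)" using t cpos by (intro mult_left_mono) (auto simp: t1_def)
      also have "\<dots> = \<rho>" using cpos by simp
      finally have "U - \<rho> \<le> f t" using eq by simp
      hence "f' t \<le> -c" using band t by auto
      thus "f' t + c/2 < 0" using cpos by simp
    qed
  qed simp
  have ft1: "f t1 \<le> U - \<rho>" using s1[rule_format, of t1] t1ge cpos rpos by (simp add: t1_def)
  have s2: "\<forall>t\<ge>t1. \<forall>k\<in>{()}. (\<lambda>k t. f t - (U - \<rho>)) k t \<le> 0"
  proof (rule first_exit[where \<phi>' = "\<lambda>k t. f' t"])
    show "\<forall>k\<in>{()}. \<forall>t\<ge>t1. ((\<lambda>t. f t - (U - \<rho>)) has_real_derivative f' t) (at t within {t1..})"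
    proof (intro ballI allI impI)
      fix t assume "t \<ge> t1"
      hence "(f has_real_derivative f' t) (at t within {t0..})" using deriv t1ge by auto
      hence "(f has_real_derivative f' t) (at t within {t1..})"
        by (rule DERIV_subset) (use t1ge in auto)
      thus "((\<lambda>t. f t - (U - \<rho>)) has_real_derivative f' t) (at t within {t1..})"
        by (auto intro!: derivative_eq_intros)
    qed
    show "\<forall>k\<in>{()}. f t1 - (U - \<rho>) \<le> 0" using ft1 by simp
    show "\<forall>t\<ge>t1. (\<forall>k\<in>{()}. f t - (U - \<rho>) \<le> 0) \<longrightarrow> (\<forall>k\<in>{()}. f t - (U - \<rho>) = 0 \<longrightarrow> f' t < 0)"
    proof (intro allI impI ballI)
      fix t assume "t \<ge> t1" "f t - (U - \<rho>) = 0"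
      hence "f' t \<le> -c" using band t1ge by auto
      thus "f' t < 0" using cpos by simp
    qed
  qed simp
  thus ?thesis unfolding t1_def by auto
qed




lemma core:
  fixes A C E r pi \<theta> e e' :: real
  assumes "A \<ge> 0" "C \<ge> 0" "E \<ge> 0" "E \<le> \<theta> * C" "r > 0" "pi > 0" "\<theta> > 1" "e' > 0" "e \<ge> 0"
    and h1: "(1 - \<theta>*pi) * (A + e + E) = r * (\<theta>*pi)"
    and h2: "(1 - pi) * (A + e' + C) = r * pi"
  shows "\<theta> \<le> e / e'"
proof -
  have tp: "\<theta>*pi > 0" using assms by simp
  have pos1: "1 - \<theta>*pi > 0"
  proof (rule ccontr)
    assume "\<not> ?thesis"
    hence "(1 - \<theta>*pi) * (A + e + E) \<le> 0" using assms by (intro mult_nonpos_nonneg) auto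
    moreover have "r * (\<theta>*pi) > 0" using assms tp by simp
    ultimately show False using h1 by simp
  qed
  have "(1 - \<theta>*pi) * (A + e + E) \<le> (1 - \<theta>*pi) * (A + e + \<theta>*C)"
    using pos1 assms by (intro mult_left_mono) auto
  moreover have "\<theta> * ((1 - pi) * (A + e' + C)) = (1 - \<theta>*pi) * (A + e + E)"
    using h1 h2 by (metis mult.assoc mult.left_commute)
  ultimately have ineq: "\<theta> * ((1 - pi) * (A + e' + C)) \<le> (1 - \<theta>*pi) * (A + e + \<theta>*C)" by simp
  have key: "(\<theta>-1)*(A+e') + \<theta>*pi*C*(\<theta>-1) \<le> (e-e')*(1-\<theta>*pi)"
    using ineq by (simp add: algebra_simps)
  have "\<theta>*pi*C*(\<theta>-1) \<ge> 0" using assms by simp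
  hence k2: "(\<theta>-1)*e' \<le> (e-e')*(1-\<theta>*pi)"
    using key assms mult_left_mono[of e' "A+e'" "\<theta>-1"] by (simp add: algebra_simps)
  have "(\<theta>-1)*e' > 0" using assms by simp
  hence "e > e'" using k2 pos1 by (smt (verit) mult_nonpos_nonneg)
  hence "(e-e')*(1-\<theta>*pi) \<le> (e-e')*1" using tp by (intro mult_left_mono) auto
  hence "(\<theta>-1)*e' \<le> e - e'" using k2 by simp
  hence "\<theta>*e' \<le> e" by (simp add: algebra_simps)
  thus ?thesis using assms by (simp add: pos_le_divide_eq)
qed




locale sis =
  fixes B :: "real^'n^'n" and lam delta s :: "real^'n" and q :: "'n \<Rightarrow> real \<Rightarrow> real"
  assumes Bnn: "\<And>i j. B$i$j \<ge> 0" and lamnn: "\<And>i. lam$i \<ge> 0"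
    and dpos: "\<And>i. delta$i > 0" and Qpos: "\<And>i. q i (s$i) > 0"
    and pu: "\<And>e. e > 0 \<Longrightarrow> \<exists>!p. (\<forall>i. p$i > 0) \<and> eq_map B (lam + e *\<^sub>R 1) delta q s p = 0"
begin

abbreviation Q where "Q i \<equiv> q i (s$i)"
definition pe where "pe e = pbar_eps B lam delta q s e"
abbreviation F where "F \<equiv> field B lam delta q s"

lemma Fc: "F p $ i = (1 - p$i) * Q i * (lam$i + (B *v p)$i) - delta$i * p$i"
  by (simp add: field_def)

lemma eqc: "eq_map B l delta q s p $ i = (1 - p$i) * (l$i + (B *v p)$i) - delta$i / Q i * p$i"
  by (simp add: eq_map_def)

lemma F_eq: "F p $ i = Q i * eq_map B lam delta q s p $ i"
  using Qpos[of i] by (simp add: Fc eqc algebra_simps)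

lemma pe_prop: "e > 0 \<Longrightarrow> (\<forall>i. pe e $ i > 0) \<and> eq_map B (lam + e *\<^sub>R 1) delta q s (pe e) = 0"
  unfolding pe_def pbar_eps_def by (rule theI'[OF pu])

lemma pe_pos: "e > 0 \<Longrightarrow> pe e $ i > 0" using pe_prop by blast

lemma pe_eqc: "e > 0 \<Longrightarrow> (1 - pe e$i) * (lam$i + e + (B *v pe e)$i) = delta$i / Q i * pe e$i"
proof -
  assume "e > 0"
  hence "eq_map B (lam + e *\<^sub>R 1) delta q s (pe e) $ i = 0" using pe_prop by simp
  thus ?thesis by (simp add: eqc)
qed

lemma Bv_nonneg: "(\<And>j. p$j \<ge> 0) \<Longrightarrow> (B *v p)$i \<ge> 0"
  unfolding matrix_vector_mult_def using Bnn by (simp add: sum_nonneg)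

lemma Bv_mono: "(\<And>j. p$j \<le> r$j) \<Longrightarrow> (B *v p)$i \<le> (B *v r)$i"
  unfolding matrix_vector_mult_def using Bnn by (simp add: sum_mono mult_left_mono)

lemma Bv_scale: "(B *v (c *\<^sub>R p))$i = c * (B *v p)$i"
  unfolding matrix_vector_mult_def by (simp add: sum_distrib_left algebra_simps)

lemma cmp:
  assumes e'pos: "e' > 0" and enn: "e \<ge> 0" and xnn: "\<And>j. x$j \<ge> 0"
    and xeq: "\<And>i. (1 - x$i) * (lam$i + e + (B *v x)$i) = delta$i / Q i * x$i"
  shows "x$i \<le> max 1 (e/e') * pe e' $ i"
proof -
  let ?p = "pe e'"
  have pp: "\<And>j. ?p$j > 0" using pe_pos e'pos by blast
  define \<theta> where "\<theta> = Max (range (\<lambda>j. x$j / ?p$j))"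
  have th_ge: "x$j \<le> \<theta> * ?p$j" for j
  proof -
    have "x$j / ?p$j \<le> \<theta>" unfolding \<theta>_def by (rule Max_ge) auto
    thus ?thesis using pp[of j] by (simp add: divide_le_eq)
  qed
  have "\<theta> \<in> range (\<lambda>j. x$j / ?p$j)" unfolding \<theta>_def by (rule Max_in) auto
  then obtain i0 where i0: "\<theta> = x$i0 / ?p$i0" by auto
  have "\<theta> \<le> max 1 (e/e')"
  proof (cases "\<theta> \<le> 1")
    case True thus ?thesis by simp
  next
    case False
    hence th1: "\<theta> > 1" by simp
    have xi0: "x$i0 = \<theta> * ?p$i0" using i0 pp[of i0] by simp
    have E: "(B *v x)$i0 \<le> \<theta> * (B *v ?p)$i0"
      using Bv_mono[of x "\<theta> *\<^sub>R ?p" i0] th_ge Bv_scale by simp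
    have "\<theta> \<le> e / e'"
    proof (rule core[of "lam$i0" "(B *v ?p)$i0" "(B *v x)$i0" \<theta> "delta$i0 / Q i0" "?p$i0" e' e])
      show "0 \<le> (B *v ?p)$i0" using Bv_nonneg pp less_imp_le by blast
      show "0 \<le> (B *v x)$i0" using Bv_nonneg xnn by blast
      show "0 < delta$i0 / Q i0" using dpos Qpos by simp
      show "(1 - \<theta> * ?p$i0) * (lam$i0 + e + (B *v x)$i0) = delta$i0 / Q i0 * (\<theta> * ?p$i0)"
        using xeq[of i0] xi0 by simp
      show "(1 - ?p$i0) * (lam$i0 + e' + (B *v ?p)$i0) = delta$i0 / Q i0 * ?p$i0"
        using pe_eqc e'pos by blast
    qed (use lamnn E pp th1 e'pos enn in auto)
    thus ?thesis by simp
  qed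
  thus ?thesis using th_ge[of i] pp[of i] by (meson dual_order.trans less_imp_le mult_right_mono)
qed

lemma pe_mono: "0 < e \<Longrightarrow> e \<le> e' \<Longrightarrow> pe e $ i \<le> pe e' $ i"
  using cmp[of e' e "pe e" i] pe_pos pe_eqc by (simp add: less_imp_le)

lemma pe_lip: "0 < e' \<Longrightarrow> e' \<le> e \<Longrightarrow> pe e $ i \<le> (e/e') * pe e' $ i"
  using cmp[of e' e "pe e" i] pe_pos pe_eqc by (simp add: less_imp_le)

lemma pe_lt1: "e > 0 \<Longrightarrow> pe e $ i < 1"
proof -
  assume e: "e > 0"
  have "delta$i / Q i * pe e$i > 0" using dpos Qpos pe_pos e by simp
  hence "(1 - pe e$i) * (lam$i + e + (B *v pe e)$i) > 0" using pe_eqc e by simp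
  moreover have "lam$i + e + (B *v pe e)$i > 0" using lamnn e Bv_nonneg[of "pe e" i] pe_pos
    by (smt (verit))
  ultimately show ?thesis by (simp add: zero_less_mult_iff)
qed

end



context sis begin

lemma F_upper:
  assumes "\<And>j. y$j \<le> z$j" "y$i \<le> 1"
  shows "F y $ i \<le> F z $ i + (z$i - y$i) * (Q i * (lam$i + (B *v z)$i) + delta$i)"
proof -
  have "(B *v y)$i \<le> (B *v z)$i" using Bv_mono assms by blast
  hence "(1 - y$i) * Q i * (lam$i + (B *v y)$i) \<le> (1 - y$i) * Q i * (lam$i + (B *v z)$i)"
    using assms Qpos[of i] by (intro mult_left_mono) auto
  thus ?thesis by (simp add: Fc algebra_simps)
qed

lemma F_lower:
  assumes "\<And>j. z$j \<le> y$j" "y$i \<le> 1"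
  shows "F z $ i - (y$i - z$i) * (Q i * (lam$i + (B *v z)$i) + delta$i) \<le> F y $ i"
proof -
  have "(B *v z)$i \<le> (B *v y)$i" using Bv_mono assms by blast
  hence "(1 - y$i) * Q i * (lam$i + (B *v z)$i) \<le> (1 - y$i) * Q i * (lam$i + (B *v y)$i)"
    using assms Qpos[of i] by (intro mult_left_mono) auto
  thus ?thesis by (simp add: Fc algebra_simps)
qed

lemma F_pe: "e > 0 \<Longrightarrow> F (pe e) $ i = - (Q i * (1 - pe e $ i) * e)"
proof -
  assume e: "e > 0"
  have "eq_map B lam delta q s (pe e) $ i = - ((1 - pe e $ i) * e)"
    using pe_eqc[OF e, of i] by (simp add: eqc algebra_simps)
  thus ?thesis by (simp add: F_eq)
qed

lemma comp_deriv:
  assumes "is_solution F x" "t \<ge> 0"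
  shows "((\<lambda>t. x t $ i) has_real_derivative (F (x t) $ i)) (at t within {0..})"
proof -
  have "(x has_vector_derivative F (x t)) (at t within {0..})" using assms unfolding is_solution_def by blast
  from bounded_linear.has_vector_derivative[OF bounded_linear_vec_nth this, of i]
  show ?thesis by (simp add: has_real_derivative_iff_has_vector_derivative)
qed

lemma comp_deriv':
  assumes "is_solution F x" "t \<ge> t0" "t0 \<ge> 0"
  shows "((\<lambda>t. x t $ i) has_real_derivative (F (x t) $ i)) (at t within {t0..})"
  by (rule DERIV_subset[OF comp_deriv[OF assms(1)]]) (use assms in auto)

end



context sis begin

definition MQ where "MQ = Max (range (\<lambda>i. Q i * (B *v 1)$i))"

lemma MQ_ge: "Q i * (B *v 1)$i \<le> MQ" unfolding MQ_def by (rule Max_ge) auto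

lemma R_nonneg: "(B *v 1)$i \<ge> 0" by (rule Bv_nonneg) simp

lemma MQ_nonneg: "MQ \<ge> 0"
proof -
  have "0 \<le> Q i * (B *v 1)$i" for i using Qpos[of i] R_nonneg[of i] by simp
  thus ?thesis using MQ_ge by (meson order.trans)
qed

lemma Bv_low:
  assumes "\<And>j. -w \<le> y$j"
  shows "(B *v y)$i \<ge> -w * (B *v 1)$i"
proof -
  have "(B *v ((-w) *\<^sub>R 1))$i \<le> (B *v y)$i" using assms by (intro Bv_mono) simp
  moreover have "(B *v ((-w) *\<^sub>R 1))$i = -w * (B *v 1)$i" by (rule Bv_scale)
  ultimately show ?thesis by simp
qed

lemma face_low:
  assumes w: "0 < w" "w \<le> 1" and y: "\<And>j. -w \<le> y$j" and yi: "y$i = -w"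
  shows "F y $ i > -(2*MQ+1)*w"
proof -
  let ?R = "(B *v 1)$i"
  have h1: "lam$i + (B *v y)$i \<ge> -w * ?R" using Bv_low[OF y, of i] lamnn[of i] by simp
  have a1: "(1+w)*Q i*(-w * ?R) \<le> (1+w)*Q i*(lam$i + (B *v y)$i)"
    using h1 Qpos[of i] w by (intro mult_left_mono) auto
  have a2: "F y $ i = (1+w)*Q i*(lam$i + (B *v y)$i) + delta$i * w" using yi by (simp add: Fc)
  have a3: "delta$i * w > 0" using dpos w by simp
  have a4: "(1+w)*Q i*(-w * ?R) = - (w * ((1+w) * (Q i * ?R)))" by (simp add: algebra_simps)
  have "(1+w) * (Q i * ?R) \<le> 2 * MQ"
  proof -
    have "(1+w) * (Q i * ?R) \<le> 2 * (Q i * ?R)"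
      using w Qpos[of i] R_nonneg[of i] by (intro mult_right_mono) auto
    thus ?thesis using MQ_ge[of i] by simp
  qed
  hence a5: "w * ((1+w) * (Q i * ?R)) \<le> w * (2*MQ)" using w by (intro mult_left_mono) auto
  have a6: "-(2*MQ+1)*w = -(w*(2*MQ)) - w" by (simp add: algebra_simps)
  have "delta$i * w > 0" using a3 .
  show ?thesis using a1 a2 a4 a5 a6 w
  proof -
    have "F y $ i \<ge> - (w * (2*MQ)) + delta$i * w" using a1 a2 a4 a5 by linarith
    moreover have "- (w * (2*MQ)) + delta$i * w > -(w*(2*MQ)) - w" using a3 w by linarith
    ultimately show ?thesis using a6 by linarith
  qed
qed

lemma face_up:
  assumes w: "0 < w" "w \<le> 1" and y: "\<And>j. -w \<le> y$j" and yi: "y$i = 1 + w"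
  shows "F y $ i < (2*MQ+1)*w"
proof -
  let ?R = "(B *v 1)$i"
  have h1: "lam$i + (B *v y)$i \<ge> -w * ?R" using Bv_low[OF y, of i] lamnn[of i] by simp
  have a1: "w*Q i*(-w * ?R) \<le> w*Q i*(lam$i + (B *v y)$i)"
    using h1 Qpos[of i] w by (intro mult_left_mono) auto
  have a2: "F y $ i = -(w*Q i*(lam$i + (B *v y)$i)) - delta$i * (1+w)" using yi by (simp add: Fc algebra_simps)
  have a3: "delta$i * (1+w) > 0" using dpos w by simp
  have a4: "w*Q i*(-w * ?R) = - (w * (w * (Q i * ?R)))" by (simp add: algebra_simps)
  have "w * (Q i * ?R) \<le> MQ"
  proof -
    have "w * (Q i * ?R) \<le> 1 * (Q i * ?R)"
      using w Qpos[of i] R_nonneg[of i] by (intro mult_right_mono) auto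
    thus ?thesis using MQ_ge[of i] by simp
  qed
  hence a5: "w * (w * (Q i * ?R)) \<le> w * MQ" using w by (intro mult_left_mono) auto
  have a6: "MQ \<ge> 0" using MQ_ge[of i] Qpos[of i] R_nonneg[of i] by (smt (verit) mult_nonneg_nonneg)
  have "F y $ i < w * MQ" using a1 a2 a3 a4 a5 by linarith
  moreover have "w * MQ \<le> (2*MQ+1)*w" using a6 w by (simp add: algebra_simps)
  ultimately show ?thesis by linarith
qed

end


context sis begin
lemma cube_inv:
  assumes sol: "is_solution F x" and x0: "x 0 \<in> unit_cube"
  shows "\<forall>t\<ge>0. x t \<in> unit_cube"
proof (intro allI impI)
  fix T :: real assume T: "T \<ge> 0"
  define K where "K = 2*MQ+1"
  have bnd: "-\<eta>*exp(K*T) \<le> x T $ i \<and> x T $ i \<le> 1 + \<eta>*exp(K*T)"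
    if eta: "0 < \<eta>" "\<eta> \<le> exp(-K*T)" for \<eta> i
  proof -
    define \<phi> where "\<phi> = (\<lambda>(k::'n\<times>bool) t. if snd k then - x t $ fst k - \<eta>*exp(K*t) else x t $ fst k - 1 - \<eta>*exp(K*t))"
    define \<phi>' where "\<phi>' = (\<lambda>(k::'n\<times>bool) t. if snd k then - F (x t) $ fst k - \<eta>*(K*exp(K*t)) else F (x t) $ fst k - \<eta>*(K*exp(K*t)))"
    have "\<forall>t. 0 \<le> t \<and> t \<le> T \<longrightarrow> (\<forall>k\<in>UNIV. \<phi> k t \<le> 0)"
    proof (rule first_exit_T[where \<phi>'=\<phi>'])
      show "\<forall>k\<in>UNIV. \<forall>t\<ge>0. (\<phi> k has_real_derivative \<phi>' k t) (at t within {0..})"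
      proof (intro ballI allI impI)
        fix k :: "'n \<times> bool" and t :: real assume "t \<ge> 0"
        note d = comp_deriv[OF sol this, of "fst k"]
        have e: "((\<lambda>t. \<eta>*exp(K*t)) has_real_derivative \<eta>*(K*exp(K*t))) (at t within {0..})"
        proof -
          have "((\<lambda>t. K*t) has_real_derivative K) (at t within {0..})"
            using DERIV_cmult[OF DERIV_ident[of "at t within {0..}"], of K] by simp
          from DERIV_cmult[OF DERIV_chain2[OF DERIV_exp this], of \<eta>]
          show ?thesis by (simp add: algebra_simps)
        qed
        show "(\<phi> k has_real_derivative \<phi>' k t) (at t within {0..})"
        proof (cases "snd k")
          case True
          have eq: "\<phi> k = (\<lambda>t. - x t $ fst k - \<eta>*exp(K*t))" by (rule ext) (simp add: \<phi>_def True)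
          have eq': "\<phi>' k t = - F (x t) $ fst k - \<eta>*(K*exp(K*t))" by (simp add: \<phi>'_def True)
          show ?thesis unfolding eq eq' by (rule DERIV_diff[OF DERIV_minus[OF d] e])
        next
          case False
          have eq: "\<phi> k = (\<lambda>t. (x t $ fst k - 1) - \<eta>*exp(K*t))" by (rule ext) (simp add: \<phi>_def False)
          have eq': "\<phi>' k t = (F (x t) $ fst k - 0) - \<eta>*(K*exp(K*t))" by (simp add: \<phi>'_def False)
          show ?thesis unfolding eq eq' by (rule DERIV_diff[OF DERIV_diff[OF d DERIV_const] e])
        qed
      qed
      show "\<forall>k\<in>UNIV. \<phi> k 0 \<le> 0"
      proof
        fix k :: "'n \<times> bool"
        have "0 \<le> x 0 $ fst k" "x 0 $ fst k \<le> 1" using x0 unfolding unit_cube_def by auto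
        thus "\<phi> k 0 \<le> 0" using eta by (cases "snd k") (auto simp: \<phi>_def)
      qed
      show "\<forall>t. 0 \<le> t \<and> t < T \<longrightarrow> (\<forall>k\<in>UNIV. \<phi> k t \<le> 0) \<longrightarrow> (\<forall>k\<in>UNIV. \<phi> k t = 0 \<longrightarrow> \<phi>' k t < 0)"
      proof (intro allI impI ballI)
        fix t k assume t: "0 \<le> t \<and> t < T" and all: "\<forall>k\<in>UNIV. \<phi> k t \<le> 0" and tk: "\<phi> k t = 0"
        define w where "w = \<eta>*exp(K*t)"
        have wpos: "w > 0" using eta by (simp add: w_def)
        have Kpos: "K > 0"
        proof -
          show ?thesis using MQ_nonneg by (simp add: K_def)
        qed
        have "w \<le> exp(-K*T) * exp(K*t)" unfolding w_def using eta by (intro mult_right_mono) auto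
        also have "\<dots> = exp(-K*T + K*t)" by (rule mult_exp_exp)
        also have "\<dots> \<le> 1"
        proof -
          have "K*t \<le> K*T" using t Kpos by (intro mult_left_mono) auto
          hence "-K*T + K*t \<le> 0" by simp
          thus ?thesis by simp
        qed
        finally have w1: "w \<le> 1" .
        have low: "\<And>j. -w \<le> x t $ j"
        proof -
          fix j show "-w \<le> x t $ j" using all[rule_format, of "(j,True)"] by (simp add: \<phi>_def w_def)
        qed
        obtain i b where k: "k = (i,b)" by (cases k)
        have ew: "\<eta>*(K*exp(K*t)) = K*w" by (simp add: w_def)
        show "\<phi>' k t < 0"
        proof (cases b)
          case True
          hence "x t $ i = -w" using tk k by (simp add: \<phi>_def w_def)
          from face_low[OF wpos w1 low this] have "F (x t) $ i > - (K*w)" unfolding K_def by (simp add: algebra_simps)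
          moreover have "\<phi>' k t = - F (x t) $ i - \<eta>*(K*exp(K*t))" using True k by (simp add: \<phi>'_def)
          ultimately show ?thesis using ew by linarith
        next
          case False
          hence "x t $ i = 1 + w" using tk k by (simp add: \<phi>_def w_def)
          from face_up[OF wpos w1 low this] have "F (x t) $ i < K*w" by (simp add: K_def)
          moreover have "\<phi>' k t = F (x t) $ i - \<eta>*(K*exp(K*t))" using False k by (simp add: \<phi>'_def)
          ultimately show ?thesis using ew by linarith
        qed
      qed
    qed simp
    hence "\<phi> (i,True) T \<le> 0" "\<phi> (i,False) T \<le> 0" using T by auto
    thus ?thesis by (simp add: \<phi>_def)
  qed
  have "0 \<le> x T $ i \<and> x T $ i \<le> 1" for i
  proof (rule ccontr)
    assume "\<not> ?thesis"
    then obtain g where g: "g > 0" "x T $ i < -g \<or> x T $ i > 1 + g"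
    proof (cases "x T $ i < 0")
      case True
      assume r: "\<And>g. 0 < g \<Longrightarrow> x T $ i < - g \<or> 1 + g < x T $ i \<Longrightarrow> thesis"
      show thesis by (rule r[of "- x T $ i / 2"]) (use True in auto)
    next
      case False
      assume r: "\<And>g. 0 < g \<Longrightarrow> x T $ i < - g \<or> 1 + g < x T $ i \<Longrightarrow> thesis"
      hence "x T $ i > 1" using False \<open>\<not> (0 \<le> x T $ i \<and> x T $ i \<le> 1)\<close> by simp
      show thesis by (rule r[of "(x T $ i - 1) / 2"]) (use \<open>x T $ i > 1\<close> in \<open>auto simp: field_simps\<close>)
    qed
    define \<eta> where "\<eta> = min (exp(-K*T)) (g / exp(K*T))"
    have ep: "\<eta> > 0" using g by (simp add: \<eta>_def)
    have el: "\<eta> \<le> exp(-K*T)" by (simp add: \<eta>_def)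
    have "\<eta> \<le> g / exp(K*T)" by (simp add: \<eta>_def)
    hence eg: "\<eta>*exp(K*T) \<le> g" by (simp add: le_divide_eq)
    show False using bnd[OF ep el, of i] g eg by linarith
  qed
  thus "x T \<in> unit_cube" unfolding unit_cube_def by simp
qed

end



locale sis2 = sis B lam delta s q for B :: "real^'n^'n" and lam delta s q +
  fixes eps :: "nat \<Rightarrow> real"
  assumes eps_pos: "\<And>l. eps l > 0" and eps_decr: "decseq eps" and eps_lim: "eps \<longlonglongrightarrow> 0"
begin

definition ps where "ps = (\<chi> i. lim (\<lambda>l. pe (eps l) $ i))"

lemma ps_comp_lim: "(\<lambda>l. pe (eps l) $ i) \<longlonglongrightarrow> ps $ i"
proof -
  have "decseq (\<lambda>l. pe (eps l) $ i)"
    using eps_decr eps_pos pe_mono unfolding decseq_def by blast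
  moreover have "\<forall>l. 0 \<le> pe (eps l) $ i" using pe_pos eps_pos less_imp_le by blast
  ultimately obtain L where L: "(\<lambda>l. pe (eps l) $ i) \<longlonglongrightarrow> L" by (rule decseq_convergent)
  hence "lim (\<lambda>l. pe (eps l) $ i) = L" by (rule limI)
  thus ?thesis using L by (simp add: ps_def)
qed

lemma ps_lim: "(\<lambda>l. pe (eps l)) \<longlonglongrightarrow> ps"
  by (rule vec_tendstoI) (rule ps_comp_lim)

lemma ps_nonneg: "ps $ i \<ge> 0"
proof -
  have "\<forall>l. 0 \<le> pe (eps l) $ i" using pe_pos eps_pos less_imp_le by blast
  thus ?thesis using LIMSEQ_le_const[OF ps_comp_lim] by blast
qed

lemma ps_le: "e > 0 \<Longrightarrow> ps $ i \<le> pe e $ i"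
proof -
  assume e: "e > 0"
  have "\<forall>\<^sub>F l in sequentially. eps l < e" using eps_lim e by (rule order_tendstoD)
  then obtain N where N: "\<And>l. l \<ge> N \<Longrightarrow> eps l < e" unfolding eventually_sequentially by blast
  have "\<forall>l\<ge>N. pe (eps l) $ i \<le> pe e $ i" using N eps_pos pe_mono less_imp_le by blast
  thus ?thesis using LIMSEQ_le_const2[OF ps_comp_lim] by blast
qed

lemma ps_lt1: "ps $ i < 1" using ps_le[of 1 i] pe_lt1[of 1 i] by simp

lemma ps_eq: "(1 - ps$i) * (lam$i + (B *v ps)$i) = delta$i / Q i * ps$i"
proof -
  let ?p = "\<lambda>l. pe (eps l)"
  have Bl: "(\<lambda>l. (B *v ?p l)$i) \<longlonglongrightarrow> (B *v ps)$i"
    unfolding matrix_vector_mult_def by (auto intro!: tendsto_intros ps_comp_lim)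
  have "(\<lambda>l. (1 - ?p l $i) * (lam$i + eps l + (B *v ?p l)$i)) \<longlonglongrightarrow> (1 - ps$i) * (lam$i + 0 + (B *v ps)$i)"
    by (intro tendsto_intros ps_comp_lim eps_lim Bl)
  moreover have "(\<lambda>l. (1 - ?p l $i) * (lam$i + eps l + (B *v ?p l)$i)) = (\<lambda>l. delta$i / Q i * ?p l $ i)"
    using pe_eqc eps_pos by blast
  moreover have "(\<lambda>l. delta$i / Q i * ?p l $ i) \<longlonglongrightarrow> delta$i / Q i * ps$i"
    by (intro tendsto_intros ps_comp_lim)
  ultimately show ?thesis using LIMSEQ_unique by fastforce
qed

lemma F_ps: "F ps $ i = 0"
  using ps_eq[of i] by (simp add: F_eq eqc)

lemma ps_eqQ: "delta$i * ps$i = Q i * ((1 - ps$i) * (lam$i + (B *v ps)$i))"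
  using ps_eq[of i] Qpos[of i] by (simp add: field_simps)

lemma ps_lt: "e > 0 \<Longrightarrow> ps $ i < pe e $ i"
proof (rule ccontr)
  assume e: "e > 0" and "\<not> ps $ i < pe e $ i"
  hence eq: "pe e $ i = ps $ i" using ps_le[OF e, of i] by simp
  have "F ps $ i - (pe e $ i - ps $ i) * (Q i * (lam$i + (B *v ps)$i) + delta$i) \<le> F (pe e) $ i"
    using F_lower[of ps "pe e" i] ps_le[OF e] pe_lt1[OF e, of i] by simp
  hence "0 \<le> F (pe e) $ i" using eq F_ps by simp
  moreover have "F (pe e) $ i < 0" using F_pe[OF e] Qpos[of i] pe_lt1[OF e, of i] e by simp
  ultimately show False by simp
qed

lemma ps_cube: "ps \<in> unit_cube" using ps_nonneg ps_lt1 by (simp add: unit_cube_def less_imp_le)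

definition Cp where "Cp i = (B *v ps)$i"

lemma Cp_nonneg: "Cp i \<ge> 0" unfolding Cp_def by (rule Bv_nonneg) (rule ps_nonneg)

lemma F_tau: "F (\<tau> *\<^sub>R ps) $ i = Q i * (1 - \<tau>) * (lam$i + \<tau> * ps$i * Cp i)"
proof -
  have "F (\<tau> *\<^sub>R ps) $ i = (1 - \<tau>*ps$i) * Q i * (lam$i + \<tau> * Cp i) - \<tau> * (delta$i * ps$i)"
    by (simp add: Fc Bv_scale Cp_def)
  also have "\<dots> = (1 - \<tau>*ps$i) * Q i * (lam$i + \<tau> * Cp i) - \<tau> * (Q i * ((1 - ps$i) * (lam$i + Cp i)))"
    using ps_eqQ[of i] by (simp add: Cp_def)
  also have "\<dots> = Q i * (1 - \<tau>) * (lam$i + \<tau> * ps$i * Cp i)" by (simp add: algebra_simps)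
  finally show ?thesis .
qed

lemma P_pos: "ps$i > 0 \<Longrightarrow> 0 < \<tau> \<Longrightarrow> lam$i + \<tau> * ps$i * Cp i > 0"
proof -
  assume p: "ps$i > 0" and t: "0 < \<tau>"
  have "delta$i * ps$i > 0" using dpos p by simp
  hence "(1 - ps$i) * (lam$i + Cp i) > 0" using ps_eqQ[of i] Qpos[of i] by (simp add: Cp_def zero_less_mult_iff)
  hence "lam$i + Cp i > 0" using ps_lt1[of i] by (simp add: zero_less_mult_iff)
  hence "lam$i > 0 \<or> Cp i > 0" using lamnn[of i] Cp_nonneg[of i] by linarith
  thus ?thesis using lamnn[of i] Cp_nonneg[of i] p t by (smt (verit) mult_pos_pos mult_nonneg_nonneg)
qed

lemma inv_up:
  assumes sol: "is_solution F x" and cube: "\<forall>t\<ge>0. x t \<in> unit_cube" and t0: "t0 \<ge> 0" and e: "e > 0"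
    and init: "\<forall>i. x t0 $ i \<le> pe e $ i"
  shows "\<forall>t\<ge>t0. \<forall>i. x t $ i \<le> pe e $ i"
proof -
  have "\<forall>t\<ge>t0. \<forall>i\<in>UNIV. (\<lambda>i t. x t $ i - pe e $ i) i t \<le> 0"
  proof (rule first_exit[where \<phi>' = "\<lambda>i t. F (x t) $ i"])
    show "\<forall>i\<in>UNIV. \<forall>t\<ge>t0. ((\<lambda>t. x t $ i - pe e $ i) has_real_derivative F (x t) $ i) (at t within {t0..})"
      using comp_deriv'[OF sol _ t0] by (auto intro!: derivative_eq_intros)
    show "\<forall>i\<in>UNIV. x t0 $ i - pe e $ i \<le> 0" using init by simp
    show "\<forall>t\<ge>t0. (\<forall>i\<in>UNIV. x t $ i - pe e $ i \<le> 0) \<longrightarrow> (\<forall>i\<in>UNIV. x t $ i - pe e $ i = 0 \<longrightarrow> F (x t) $ i < 0)"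
    proof (intro allI impI ballI)
      fix t i assume t: "t \<ge> t0" and all: "\<forall>i\<in>UNIV. x t $ i - pe e $ i \<le> 0" and eq: "x t $ i - pe e $ i = 0"
      have "x t $ i \<le> 1" using cube t t0 unfolding unit_cube_def by auto
      hence "F (x t) $ i \<le> F (pe e) $ i + (pe e $ i - x t $ i) * (Q i * (lam$i + (B *v pe e)$i) + delta$i)"
        using F_upper[of "x t" "pe e" i] all by simp
      hence "F (x t) $ i \<le> F (pe e) $ i" using eq by simp
      moreover have "F (pe e) $ i < 0" using F_pe[OF e] Qpos[of i] pe_lt1[OF e, of i] e by simp
      ultimately show "F (x t) $ i < 0" by simp
    qed
  qed simp
  thus ?thesis by simp
qed

definition Pset where "Pset = {i. ps$i > 0}"

lemma notP: "i \<notin> Pset \<Longrightarrow> ps$i = 0" using ps_nonneg[of i] by (simp add: Pset_def)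

lemma inv_low:
  assumes sol: "is_solution F x" and cube: "\<forall>t\<ge>0. x t \<in> unit_cube" and t0: "t0 \<ge> 0"
    and tau: "0 < \<tau>" "\<tau> < 1"
    and init: "\<forall>i\<in>Pset. \<tau> * ps$i \<le> x t0 $ i"
  shows "\<forall>t\<ge>t0. \<forall>i\<in>Pset. \<tau> * ps$i \<le> x t $ i"
proof -
  have "\<forall>t\<ge>t0. \<forall>i\<in>Pset. (\<lambda>i t. \<tau> * ps$i - x t $ i) i t \<le> 0"
  proof (rule first_exit[where \<phi>' = "\<lambda>i t. - F (x t) $ i"])
    show "\<forall>i\<in>Pset. \<forall>t\<ge>t0. ((\<lambda>t. \<tau> * ps$i - x t $ i) has_real_derivative - F (x t) $ i) (at t within {t0..})"
      using comp_deriv'[OF sol _ t0] by (auto intro!: derivative_eq_intros)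
    show "\<forall>i\<in>Pset. \<tau> * ps$i - x t0 $ i \<le> 0" using init by simp
    show "\<forall>t\<ge>t0. (\<forall>i\<in>Pset. \<tau> * ps$i - x t $ i \<le> 0) \<longrightarrow> (\<forall>i\<in>Pset. \<tau> * ps$i - x t $ i = 0 \<longrightarrow> - F (x t) $ i < 0)"
    proof (intro allI impI ballI)
      fix t i assume t: "t \<ge> t0" and all: "\<forall>i\<in>Pset. \<tau> * ps$i - x t $ i \<le> 0" and iP: "i \<in> Pset"
        and eq: "\<tau> * ps$i - x t $ i = 0"
      have xc: "x t \<in> unit_cube" using cube t t0 by auto
      have le: "(\<tau> *\<^sub>R ps)$j \<le> x t $ j" for j
      proof (cases "j \<in> Pset")
        case True thus ?thesis using all by auto
      next
        case False thus ?thesis using notP xc unfolding unit_cube_def by auto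
      qed
      have "x t $ i \<le> 1" using xc unfolding unit_cube_def by auto
      hence "F (\<tau> *\<^sub>R ps) $ i - (x t $ i - (\<tau> *\<^sub>R ps) $ i) * (Q i * (lam$i + (B *v (\<tau> *\<^sub>R ps))$i) + delta$i) \<le> F (x t) $ i"
        using F_lower[of "\<tau> *\<^sub>R ps" "x t" i] le by simp
      hence "F (\<tau> *\<^sub>R ps) $ i \<le> F (x t) $ i" using eq by simp
      moreover have "F (\<tau> *\<^sub>R ps) $ i > 0"
        using F_tau[of \<tau> i] P_pos[of i \<tau>] iP tau Qpos[of i] by (simp add: Pset_def)
      ultimately show "- F (x t) $ i < 0" by simp
    qed
  qed simp
  thus ?thesis by simp
qed

end



context sis2 begin

lemma up_conv:
  assumes sol: "is_solution F x" and cube: "\<forall>t\<ge>0. x t \<in> unit_cube" and e0: "e0 > 0"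
    and init: "\<forall>i. x 0 $ i \<le> pe e0 $ i" and a: "0 < a" "a \<le> e0"
  shows "\<exists>T. \<forall>t\<ge>T. \<forall>i. x t $ i \<le> pe a $ i"
proof -
  define m where "m = Min (range (\<lambda>i. Q i * (1 - pe e0 $ i)))"
  define cU where "cU = m * a"
  define LU where "LU = Max (range (\<lambda>i. Q i * (lam$i + (B *v pe e0)$i) + delta$i))"
  have mle: "m \<le> Q i * (1 - pe e0 $ i)" for i unfolding m_def by (rule Min_le) auto
  have "m \<in> range (\<lambda>i. Q i * (1 - pe e0 $ i))" unfolding m_def by (rule Min_in) auto
  then obtain i0 where "m = Q i0 * (1 - pe e0 $ i0)" by auto
  hence mpos: "m > 0" using Qpos[of i0] pe_lt1[OF e0, of i0] by simp
  have cpos: "cU > 0" using mpos a by (simp add: cU_def)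
  have Lge: "Q i * (lam$i + (B *v pe e0)$i) + delta$i \<le> LU" for i unfolding LU_def by (rule Max_ge) auto
  have fnn: "Q i * (lam$i + (B *v pe e)$i) \<ge> 0" if "e > 0" for i e
  proof -
    have "(B *v pe e)$i \<ge> 0" using Bv_nonneg[of "pe e" i] pe_pos[OF that] less_imp_le by blast
    thus ?thesis using Qpos[of i] lamnn[of i] by simp
  qed
  have Lpos: "LU > 0" using Lge[of undefined] dpos[of undefined] fnn[OF e0, of undefined] by simp
  define \<rho> where "\<rho> = cU / (2*LU)"
  define h where "h = 2*\<rho>/(cU/2)"
  define d where "d = min (\<rho>*a) (a/2)"
  have rpos: "\<rho> > 0" using cpos Lpos by (simp add: \<rho>_def)
  have hpos: "h > 0" using rpos cpos by (simp add: h_def)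
  have dpos': "d > 0" using rpos a by (simp add: d_def)
  have rL: "\<rho> * LU = cU/2" using Lpos by (simp add: \<rho>_def)
  have step: "\<forall>t\<ge>t0 + h. \<forall>i. x t $ i \<le> pe (\<epsilon> - d) $ i"
    if t0: "t0 \<ge> 0" and ea: "a \<le> \<epsilon>" and ee: "\<epsilon> \<le> e0" and xi: "\<forall>i. x t0 $ i \<le> pe \<epsilon> $ i" for t0 \<epsilon>
  proof (intro allI impI)
    fix t i assume t: "t \<ge> t0 + h"
    have epos: "\<epsilon> > 0" using a ea by simp
    have inv\<epsilon>: "\<forall>t\<ge>t0. \<forall>i. x t $ i \<le> pe \<epsilon> $ i" by (rule inv_up[OF sol cube t0 epos xi])
    have "\<forall>t\<ge>t0 + 2*\<rho>/(cU/2). x t $ i \<le> pe \<epsilon> $ i - \<rho>"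
    proof (rule band_down[where f' = "\<lambda>t. F (x t) $ i"])
      show "\<forall>t\<ge>t0. ((\<lambda>t. x t $ i) has_real_derivative F (x t) $ i) (at t within {t0..})"
        using comp_deriv'[OF sol _ t0] by blast
      show "\<forall>t\<ge>t0. x t $ i \<le> pe \<epsilon> $ i" using inv\<epsilon> by blast
      show "\<forall>t\<ge>t0. pe \<epsilon> $ i - \<rho> \<le> x t $ i \<longrightarrow> F (x t) $ i \<le> - (cU / 2)"
      proof (intro allI impI)
        fix t assume tt: "t \<ge> t0" and band: "pe \<epsilon> $ i - \<rho> \<le> x t $ i"
        have le: "\<And>j. x t $ j \<le> pe \<epsilon> $ j" using inv\<epsilon> tt by blast
        have x1: "x t $ i \<le> 1" using cube tt t0 unfolding unit_cube_def by auto
        have A: "F (x t) $ i \<le> F (pe \<epsilon>) $ i + (pe \<epsilon> $ i - x t $ i) * (Q i * (lam$i + (B *v pe \<epsilon>)$i) + delta$i)"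
          by (rule F_upper[OF le x1])
        have "Q i * (1 - pe e0 $ i) \<le> Q i * (1 - pe \<epsilon> $ i)"
          using pe_mono[OF epos ee, of i] Qpos[of i] by simp
        hence "m * a \<le> Q i * (1 - pe \<epsilon> $ i) * \<epsilon>"
          using mle[of i] mpos ea a by (intro mult_mono) auto
        hence B1: "F (pe \<epsilon>) $ i \<le> - cU" using F_pe[OF epos, of i] by (simp add: cU_def)
        have "(B *v pe \<epsilon>)$i \<le> (B *v pe e0)$i" using pe_mono[OF epos ee] Bv_mono by blast
        hence "Q i * (lam$i + (B *v pe \<epsilon>)$i) + delta$i \<le> LU"
          using Lge[of i] Qpos[of i] by (smt (verit) mult_left_mono)
        moreover have "0 \<le> Q i * (lam$i + (B *v pe \<epsilon>)$i) + delta$i" using fnn[OF epos, of i] dpos[of i] by simp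
        moreover have "0 \<le> pe \<epsilon> $ i - x t $ i" "pe \<epsilon> $ i - x t $ i \<le> \<rho>" using le[of i] band by auto
        ultimately have "(pe \<epsilon> $ i - x t $ i) * (Q i * (lam$i + (B *v pe \<epsilon>)$i) + delta$i) \<le> \<rho> * LU"
          by (intro mult_mono) auto
        thus "F (x t) $ i \<le> - (cU / 2)" using A B1 rL by linarith
      qed
    qed (use rpos cpos in auto)
    hence "x t $ i \<le> pe \<epsilon> $ i - \<rho>" using t by (simp add: h_def)
    also have "\<dots> \<le> pe (\<epsilon> - d) $ i"
    proof -
      have ed: "\<epsilon> - d > 0" "\<epsilon> - d \<le> \<epsilon>" using ea dpos' by (auto simp: d_def)
      have "pe \<epsilon> $ i \<le> (\<epsilon> / (\<epsilon> - d)) * pe (\<epsilon> - d) $ i" by (rule pe_lip[OF ed])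
      hence "((\<epsilon> - d)/\<epsilon>) * pe \<epsilon> $ i \<le> pe (\<epsilon> - d) $ i"
        using ed epos by (simp add: field_simps)
      moreover have "((\<epsilon> - d)/\<epsilon>) * pe \<epsilon> $ i = pe \<epsilon> $ i - (d/\<epsilon>) * pe \<epsilon> $ i"
        using epos by (simp add: field_simps)
      moreover have "(d/\<epsilon>) * pe \<epsilon> $ i \<le> \<rho>"
      proof -
        have "(d/\<epsilon>) * pe \<epsilon> $ i \<le> (d/\<epsilon>) * 1"
          using pe_lt1[OF epos, of i] dpos' epos by (intro mult_left_mono) auto
        also have "\<dots> \<le> d / a" using dpos' a ea by (simp add: frac_le)
        also have "\<dots> \<le> \<rho>" using a by (simp add: d_def divide_le_eq)
        finally show ?thesis .
      qed
      ultimately show ?thesis by linarith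
    qed
    finally show "x t $ i \<le> pe (\<epsilon> - d) $ i" .
  qed
  have iter: "\<forall>t\<ge>real n * h. \<forall>i. x t $ i \<le> pe (max a (e0 - real n * d)) $ i" for n
  proof (induction n)
    case 0
    show ?case using inv_up[OF sol cube _ e0 init] a by simp
  next
    case (Suc n)
    define \<epsilon> where "\<epsilon> = max a (e0 - real n * d)"
    show ?case
    proof (cases "e0 - real n * d \<le> a")
      case True
      hence "max a (e0 - real (Suc n) * d) = a" "\<epsilon> = a" using dpos' by (auto simp: \<epsilon>_def algebra_simps)
      moreover have "real n * h \<le> real (Suc n) * h" using hpos by simp
      ultimately show ?thesis using Suc.IH \<epsilon>_def by (metis order.trans)
    next
      case False
      hence e\<epsilon>: "\<epsilon> = e0 - real n * d" by (simp add: \<epsilon>_def)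
      have ea: "a \<le> \<epsilon>" "\<epsilon> \<le> e0" using False dpos' by (auto simp: \<epsilon>_def)
      have t0: "real n * h \<ge> 0" using hpos by simp
      have xi: "\<forall>i. x (real n * h) $ i \<le> pe \<epsilon> $ i" using Suc.IH \<epsilon>_def by blast
      have st: "\<forall>t\<ge>real n * h + h. \<forall>i. x t $ i \<le> pe (\<epsilon> - d) $ i" by (rule step[OF t0 ea xi])
      have "\<epsilon> - d = e0 - real (Suc n) * d" using e\<epsilon> by (simp add: algebra_simps)
      moreover have "\<epsilon> - d > 0" using ea a dpos' by (simp add: d_def)
      ultimately have "pe (\<epsilon> - d) $ i \<le> pe (max a (e0 - real (Suc n) * d)) $ i" for i
        by (intro pe_mono) auto
      moreover have "real (Suc n) * h = real n * h + h" by (simp add: algebra_simps)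
      ultimately show ?thesis using st by (metis order.trans)
    qed
  qed
  obtain N where N: "e0 / d < real N" using reals_Archimedean2 by blast
  hence "e0 < real N * d" using dpos' by (simp add: divide_less_eq)
  hence "max a (e0 - real N * d) = a" using a by simp
  thus ?thesis using iter[of N] by metis
qed

end



context sis2 begin

lemma low_conv:
  assumes sol: "is_solution F x" and cube: "\<forall>t\<ge>0. x t \<in> unit_cube"
    and tau: "0 < \<tau>0" "\<tau>0 \<le> \<tau>1" "\<tau>1 < 1"
    and init: "\<forall>i\<in>Pset. \<tau>0 * ps$i \<le> x 0 $ i"
  shows "\<exists>T. \<forall>t\<ge>T. \<forall>i\<in>Pset. \<tau>1 * ps$i \<le> x t $ i"
proof -
  define g where "g = (\<lambda>i. if i \<in> Pset then Q i * (1 - \<tau>1) * (lam$i + \<tau>0 * ps$i * Cp i) else 1)"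
  define cL where "cL = Min (range g)"
  define LL where "LL = Max (range (\<lambda>i. Q i * (lam$i + Cp i) + delta$i))"
  have cle: "cL \<le> g i" for i unfolding cL_def by (rule Min_le) auto
  have gpos: "g i > 0" for i
  proof (cases "i \<in> Pset")
    case True
    hence "lam$i + \<tau>0 * ps$i * Cp i > 0" using P_pos[of i \<tau>0] tau by (simp add: Pset_def)
    thus ?thesis using True Qpos[of i] tau by (simp add: g_def)
  qed (simp add: g_def)
  have "cL \<in> range g" unfolding cL_def by (rule Min_in) auto
  hence cpos: "cL > 0" using gpos by auto
  have Lge: "Q i * (lam$i + Cp i) + delta$i \<le> LL" for i unfolding LL_def by (rule Max_ge) auto
  have fnn: "Q i * (lam$i + Cp i) \<ge> 0" for i using Qpos[of i] lamnn[of i] Cp_nonneg[of i] by simp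
  have Lpos: "LL > 0" using Lge[of undefined] dpos[of undefined] fnn[of undefined] by simp
  define \<rho> where "\<rho> = cL / (2*LL)"
  define h where "h = 2*\<rho>/(cL/2)"
  define d where "d = \<rho>"
  have rpos: "\<rho> > 0" using cpos Lpos by (simp add: \<rho>_def)
  have hpos: "h > 0" using rpos cpos by (simp add: h_def)
  have dpos': "d > 0" using rpos by (simp add: d_def)
  have rL: "\<rho> * LL = cL/2" using Lpos by (simp add: \<rho>_def)
  have step: "\<forall>t\<ge>t0 + h. \<forall>i\<in>Pset. (\<tau> + d) * ps$i \<le> x t $ i"
    if t0: "t0 \<ge> 0" and ta: "\<tau>0 \<le> \<tau>" and tb: "\<tau> \<le> \<tau>1" and xi: "\<forall>i\<in>Pset. \<tau> * ps$i \<le> x t0 $ i" for t0 \<tau>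
  proof (intro allI impI ballI)
    fix t i assume t: "t \<ge> t0 + h" and iP: "i \<in> Pset"
    have tpos: "0 < \<tau>" "\<tau> < 1" using tau ta tb by auto
    have inv\<tau>: "\<forall>t\<ge>t0. \<forall>i\<in>Pset. \<tau> * ps$i \<le> x t $ i" by (rule inv_low[OF sol cube t0 tpos xi])
    have "\<forall>t\<ge>t0 + 2*\<rho>/(cL/2). - x t $ i \<le> - (\<tau> * ps$i) - \<rho>"
    proof (rule band_down[where f' = "\<lambda>t. - F (x t) $ i"])
      show "\<forall>t\<ge>t0. ((\<lambda>t. - x t $ i) has_real_derivative - F (x t) $ i) (at t within {t0..})"
        using comp_deriv'[OF sol _ t0] by (auto intro!: derivative_eq_intros)
      show "\<forall>t\<ge>t0. - x t $ i \<le> - (\<tau> * ps$i)" using inv\<tau> iP by auto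
      show "\<forall>t\<ge>t0. - (\<tau> * ps$i) - \<rho> \<le> - x t $ i \<longrightarrow> - F (x t) $ i \<le> - (cL / 2)"
      proof (intro allI impI)
        fix t assume tt: "t \<ge> t0" and band: "- (\<tau> * ps$i) - \<rho> \<le> - x t $ i"
        have xc: "x t \<in> unit_cube" using cube tt t0 by auto
        have le: "(\<tau> *\<^sub>R ps)$j \<le> x t $ j" for j
        proof (cases "j \<in> Pset")
          case True thus ?thesis using inv\<tau> tt by auto
        next
          case False thus ?thesis using notP xc unfolding unit_cube_def by auto
        qed
        have x1: "x t $ i \<le> 1" using xc unfolding unit_cube_def by auto
        have A: "F (\<tau> *\<^sub>R ps) $ i - (x t $ i - (\<tau> *\<^sub>R ps) $ i) * (Q i * (lam$i + (B *v (\<tau> *\<^sub>R ps))$i) + delta$i) \<le> F (x t) $ i"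
          by (rule F_lower[OF le x1])
        have Bt: "(B *v (\<tau> *\<^sub>R ps))$i = \<tau> * Cp i" by (simp add: Bv_scale Cp_def)
        have "Q i * (1 - \<tau>1) * (lam$i + \<tau>0 * ps$i * Cp i) \<le> Q i * (1 - \<tau>) * (lam$i + \<tau> * ps$i * Cp i)"
        proof -
          have "\<tau>0 * ps$i * Cp i \<le> \<tau> * ps$i * Cp i"
            using ta ps_nonneg[of i] Cp_nonneg[of i] by (intro mult_right_mono) auto
          moreover have "0 \<le> lam$i + \<tau>0 * ps$i * Cp i" using lamnn[of i] ps_nonneg[of i] Cp_nonneg[of i] tau by simp
          moreover have "Q i * (1 - \<tau>1) \<le> Q i * (1 - \<tau>)" using Qpos[of i] tb by simp
          moreover have "0 \<le> Q i * (1 - \<tau>)" using Qpos[of i] tpos by simp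
          ultimately show ?thesis by (rule_tac mult_mono) auto
        qed
        hence B1: "F (\<tau> *\<^sub>R ps) $ i \<ge> cL" using F_tau[of \<tau> i] cle[of i] iP by (simp add: g_def)
        have "\<tau> * Cp i \<le> 1 * Cp i" using tpos Cp_nonneg[of i] by (intro mult_right_mono) auto
        hence "\<tau> * Cp i \<le> Cp i" by simp
        hence "Q i * (lam$i + \<tau> * Cp i) + delta$i \<le> LL"
          using Lge[of i] Qpos[of i] by (smt (verit) mult_left_mono)
        moreover have "0 \<le> Q i * (lam$i + \<tau> * Cp i) + delta$i"
          using Qpos[of i] lamnn[of i] Cp_nonneg[of i] tpos dpos[of i] by simp
        moreover have "0 \<le> x t $ i - \<tau> * ps$i" "x t $ i - \<tau> * ps$i \<le> \<rho>" using le[of i] band by auto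
        ultimately have "(x t $ i - \<tau> * ps$i) * (Q i * (lam$i + \<tau> * Cp i) + delta$i) \<le> \<rho> * LL"
          by (intro mult_mono) auto
        thus "- F (x t) $ i \<le> - (cL / 2)" using A B1 rL Bt by simp
      qed
    qed (use rpos cpos in auto)
    hence "- x t $ i \<le> - (\<tau> * ps$i) - \<rho>" using t by (simp add: h_def)
    hence "\<tau> * ps$i + \<rho> \<le> x t $ i" by linarith
    moreover have "d * ps$i \<le> \<rho>" using ps_lt1[of i] rpos by (simp add: d_def)
    ultimately show "(\<tau> + d) * ps$i \<le> x t $ i" by (simp add: algebra_simps)
  qed
  have iter: "\<forall>t\<ge>real n * h. \<forall>i\<in>Pset. min \<tau>1 (\<tau>0 + real n * d) * ps$i \<le> x t $ i" for n
  proof (induction n)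
    case 0
    show ?case using inv_low[OF sol cube _ _ _ init] tau by simp
  next
    case (Suc n)
    define \<tau> where "\<tau> = min \<tau>1 (\<tau>0 + real n * d)"
    show ?case
    proof (cases "\<tau>1 \<le> \<tau>0 + real n * d")
      case True
      hence "min \<tau>1 (\<tau>0 + real (Suc n) * d) = \<tau>1" "\<tau> = \<tau>1" using dpos' by (auto simp: \<tau>_def algebra_simps)
      moreover have "real n * h \<le> real (Suc n) * h" using hpos by simp
      ultimately show ?thesis using Suc.IH \<tau>_def by (metis order.trans)
    next
      case False
      hence et: "\<tau> = \<tau>0 + real n * d" by (simp add: \<tau>_def)
      have ta: "\<tau>0 \<le> \<tau>" "\<tau> \<le> \<tau>1" using False dpos' tau by (auto simp: \<tau>_def)
      have t0: "real n * h \<ge> 0" using hpos by simp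
      have xi: "\<forall>i\<in>Pset. \<tau> * ps$i \<le> x (real n * h) $ i" using Suc.IH \<tau>_def by blast
      have st: "\<forall>t\<ge>real n * h + h. \<forall>i\<in>Pset. (\<tau> + d) * ps$i \<le> x t $ i" by (rule step[OF t0 ta xi])
      have "\<tau> + d = \<tau>0 + real (Suc n) * d" using et by (simp add: algebra_simps)
      hence "min \<tau>1 (\<tau>0 + real (Suc n) * d) * ps$i \<le> (\<tau> + d) * ps$i" for i
        using ps_nonneg[of i] by (intro mult_right_mono) auto
      moreover have "real (Suc n) * h = real n * h + h" by (simp add: algebra_simps)
      ultimately show ?thesis using st by (metis order.trans)
    qed
  qed
  obtain N where N: "\<tau>1 / d < real N" using reals_Archimedean2 by blast
  hence "\<tau>1 < real N * d" using dpos' by (simp add: divide_less_eq)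
  hence "min \<tau>1 (\<tau>0 + real N * d) = \<tau>1" using tau by simp
  thus ?thesis using iter[of N] by metis
qed

end



context sis2 begin

lemma box_near:
  assumes a: "a > 0" and tau: "0 < \<tau>" "\<tau> < 1"
  shows "\<exists>d>0. \<forall>y. dist y ps < d \<longrightarrow> (\<forall>i. y$i \<le> pe a $ i) \<and> (\<forall>i\<in>Pset. \<tau> * ps$i \<le> y$i)"
proof -
  define g where "g = (\<lambda>i. min (pe a $ i - ps $ i) (if i \<in> Pset then (1-\<tau>) * ps$i else 1))"
  define d where "d = Min (range g)"
  have gpos: "g i > 0" for i using ps_lt[OF a, of i] tau by (simp add: g_def Pset_def)
  have "d \<in> range g" unfolding d_def by (rule Min_in) auto
  hence dpos: "d > 0" using gpos by auto
  have dle: "d \<le> g i" for i unfolding d_def by (rule Min_le) auto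
  show ?thesis
  proof (intro exI[of _ d] conjI allI impI ballI)
    show "d > 0" by (rule dpos)
  next
    fix y i assume dy: "dist y ps < d"
    have "\<bar>y$i - ps$i\<bar> \<le> dist y ps" using component_le_norm_cart[of "y - ps" i] by (simp add: dist_norm)
    hence "\<bar>y$i - ps$i\<bar> < g i" using dy dle[of i] by simp
    hence "\<bar>y$i - ps$i\<bar> < pe a $ i - ps $ i" by (simp add: g_def)
    thus "y$i \<le> pe a $ i" by linarith
  next
    fix y i assume dy: "dist y ps < d" and iP: "i \<in> Pset"
    have "\<bar>y$i - ps$i\<bar> \<le> dist y ps" using component_le_norm_cart[of "y - ps" i] by (simp add: dist_norm)
    hence "\<bar>y$i - ps$i\<bar> < g i" using dy dle[of i] by simp
    hence "\<bar>y$i - ps$i\<bar> < (1-\<tau>) * ps$i" using iP by (simp add: g_def)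
    hence "ps$i - y$i < (1-\<tau>) * ps$i" by linarith
    thus "\<tau> * ps$i \<le> y$i" by (simp add: algebra_simps)
  qed
qed

lemma box_dist:
  assumes a: "a > 0" and tau: "0 < \<tau>" "\<tau> < 1" and yc: "y \<in> unit_cube"
    and up: "\<forall>i. y$i \<le> pe a $ i" and low: "\<forall>i\<in>Pset. \<tau> * ps$i \<le> y$i"
    and ea: "dist (pe a) ps \<le> r" and et: "1 - \<tau> \<le> r"
  shows "dist y ps \<le> real CARD('n) * r"
proof -
  have ci: "\<bar>y$i - ps$i\<bar> \<le> r" for i
  proof -
    have pa: "pe a $ i - ps $ i \<le> r"
      using component_le_norm_cart[of "pe a - ps" i] ea by (simp add: dist_norm)
    show ?thesis
    proof (cases "i \<in> Pset")
      case True
      have "ps$i - y$i \<le> (1 - \<tau>) * ps$i" using low True by (simp add: algebra_simps)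
      also have "\<dots> \<le> (1 - \<tau>) * 1" using ps_lt1[of i] tau by (intro mult_left_mono) auto
      finally show ?thesis using up[rule_format, of i] pa et by simp
    next
      case False
      hence "ps$i = 0" by (rule notP)
      thus ?thesis using yc up[rule_format, of i] pa unfolding unit_cube_def by auto
    qed
  qed
  have "dist y ps \<le> (\<Sum>i\<in>UNIV. \<bar>(y - ps)$i\<bar>)" using norm_le_l1_cart[of "y - ps"] by (simp add: dist_norm)
  also have "\<dots> \<le> (\<Sum>i\<in>(UNIV::'n set). r)" using ci by (intro sum_mono) simp
  also have "\<dots> = real CARD('n) * r" by simp
  finally show ?thesis .
qed

lemma ps_stable: "stable_equilibrium F ps"
  unfolding stable_equilibrium_def
proof (intro conjI)
  show "ps \<in> unit_cube" by (rule ps_cube)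
  show "F ps = 0" by (simp add: vec_eq_iff F_ps)
next
  show "\<forall>e>0. \<exists>d>0. \<forall>x. is_solution F x \<and> x 0 \<in> unit_cube \<and> dist (x 0) ps < d \<longrightarrow> (\<forall>t\<ge>0. dist (x t) ps < e)"
  proof (intro allI impI)
    fix e :: real assume e: "e > 0"
    define N where "N = real CARD('n)"
    have Npos: "N > 0" by (simp add: N_def)
    define r where "r = e / (2*N)"
    have rpos: "r > 0" using e Npos by (simp add: r_def)
    have "\<forall>\<^sub>F l in sequentially. dist (pe (eps l)) ps < r" using ps_lim rpos by (rule tendstoD)
    then obtain l where l: "dist (pe (eps l)) ps < r" by (meson eventually_sequentially order_refl)
    define a where "a = eps l"
    have a: "a > 0" using eps_pos by (simp add: a_def)
    define \<tau> where "\<tau> = max (1/2) (1 - r)"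
    have tau: "0 < \<tau>" "\<tau> < 1" "1 - \<tau> \<le> r" using rpos by (auto simp: \<tau>_def)
    obtain d where d: "d > 0" "\<forall>y. dist y ps < d \<longrightarrow> (\<forall>i. y$i \<le> pe a $ i) \<and> (\<forall>i\<in>Pset. \<tau> * ps$i \<le> y$i)"
      using box_near[OF a tau(1,2)] by blast
    show "\<exists>d>0. \<forall>x. is_solution F x \<and> x 0 \<in> unit_cube \<and> dist (x 0) ps < d \<longrightarrow> (\<forall>t\<ge>0. dist (x t) ps < e)"
    proof (intro exI[of _ d] conjI allI impI)
      fix x t assume H: "is_solution F x \<and> x 0 \<in> unit_cube \<and> dist (x 0) ps < d" and t: "t \<ge> (0::real)"
      have sol: "is_solution F x" and cube: "\<forall>t\<ge>0. x t \<in> unit_cube" using H cube_inv by auto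
      have i0: "\<forall>i. x 0 $ i \<le> pe a $ i" "\<forall>i\<in>Pset. \<tau> * ps$i \<le> x 0 $ i" using d H by auto
      have "\<forall>i. x t $ i \<le> pe a $ i" using inv_up[OF sol cube _ a i0(1)] t by auto
      moreover have "\<forall>i\<in>Pset. \<tau> * ps$i \<le> x t $ i" using inv_low[OF sol cube _ tau(1,2) i0(2)] t by auto
      ultimately have "dist (x t) ps \<le> N * r"
        using box_dist[OF a tau(1,2), of "x t" r] cube t l tau(3) by (simp add: a_def N_def)
      also have "\<dots> = e/2" using Npos by (simp add: r_def)
      finally show "dist (x t) ps < e" using e by simp
    qed (rule d(1))
  qed
next
  have a0: "eps 0 > 0" by (rule eps_pos)
  obtain d where d: "d > 0" "\<forall>y. dist y ps < d \<longrightarrow> (\<forall>i. y$i \<le> pe (eps 0) $ i) \<and> (\<forall>i\<in>Pset. (1/2) * ps$i \<le> y$i)"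
    using box_near[OF a0, of "1/2"] by auto
  show "\<exists>d>0. \<forall>x. is_solution F x \<and> x 0 \<in> unit_cube \<and> dist (x 0) ps < d \<longrightarrow> (x \<longlongrightarrow> ps) at_top"
  proof (intro exI[of _ d] conjI allI impI)
    fix x assume H: "is_solution F x \<and> x 0 \<in> unit_cube \<and> dist (x 0) ps < d"
    have sol: "is_solution F x" and cube: "\<forall>t\<ge>0. x t \<in> unit_cube" using H cube_inv by auto
    have i0: "\<forall>i. x 0 $ i \<le> pe (eps 0) $ i" "\<forall>i\<in>Pset. (1/2) * ps$i \<le> x 0 $ i" using d H by auto
    show "(x \<longlongrightarrow> ps) at_top"
    proof (rule vec_tendstoI, rule order_tendstoI)
      fix i and y :: real assume y: "y > ps $ i"
      have "\<forall>\<^sub>F l in sequentially. pe (eps l) $ i < y" using ps_comp_lim y by (rule order_tendstoD)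
      then obtain l where l: "pe (eps l) $ i < y" by (meson eventually_sequentially order_refl)
      have "eps l \<le> eps 0" using eps_decr by (simp add: decseq_def)
      then obtain T where T: "\<forall>t\<ge>T. \<forall>i. x t $ i \<le> pe (eps l) $ i"
        using up_conv[OF sol cube a0 i0(1) eps_pos] by blast
      show "\<forall>\<^sub>F t in at_top. x t $ i < y"
        unfolding eventually_at_top_linorder using T l by (meson order.strict_trans1)
    next
      fix i and y :: real assume y: "y < ps $ i"
      show "\<forall>\<^sub>F t in at_top. y < x t $ i"
      proof (cases "i \<in> Pset")
        case False
        hence "ps$i = 0" by (rule notP)
        have "\<forall>t\<ge>0. y < x t $ i"
        proof (intro allI impI)
          fix t :: real assume "t \<ge> 0"
          hence "0 \<le> x t $ i" using cube unfolding unit_cube_def by blast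
          thus "y < x t $ i" using y \<open>ps$i = 0\<close> by simp
        qed
        thus ?thesis unfolding eventually_at_top_linorder by blast
      next
        case True
        hence pp: "ps$i > 0" by (simp add: Pset_def)
        define \<tau>1 where "\<tau>1 = max (1/2) ((1 + y/ps$i)/2)"
        have yp: "y/ps$i < 1" using y pp by (simp add: divide_less_eq)
        have t1: "1/2 \<le> \<tau>1" "\<tau>1 < 1" using yp by (auto simp: \<tau>1_def)
        have "y < ((1 + y/ps$i)/2) * ps$i" using y pp by (simp add: field_simps)
        also have "\<dots> \<le> \<tau>1 * ps$i" using pp by (intro mult_right_mono) (auto simp: \<tau>1_def)
        finally have yt: "y < \<tau>1 * ps$i" .
        obtain T where T: "\<forall>t\<ge>T. \<forall>i\<in>Pset. \<tau>1 * ps$i \<le> x t $ i"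
          using low_conv[OF sol cube _ t1(1) t1(2) i0(2)] by auto
        show ?thesis unfolding eventually_at_top_linorder using T True yt by (meson order.strict_trans2)
      qed
    qed
  qed (rule d(1))
qed

end

theorem proposition3:
  fixes B :: "real^'n^'n" and lam delta s :: "real^'n"
    and q :: "'n \<Rightarrow> real \<Rightarrow> real" and S :: "(real^'n) set"
    and eps :: "nat \<Rightarrow> real"
  assumes B_nonneg: "\<forall>i j. B $ i $ j \<ge> 0"
    and B_diag: "\<forall>i. B $ i $ i = 0"
    and B_conn: "weakly_connected B"
    and lam_nonneg: "\<forall>i. lam $ i \<ge> 0"
    and delta_pos: "\<forall>i. delta $ i > 0"
    and q_range: "\<forall>i. \<forall>x\<ge>0. 0 < q i x \<and> q i x \<le> 1"
    and q_decr: "\<forall>i. \<forall>x y. 0 \<le> x \<and> x \<le> y \<longrightarrow> q i y \<le> q i x"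
    and q_convex: "\<forall>i. strictly_convex_on {0..} (q i)"
    and q_C1: "\<forall>i. \<exists>q'. continuous_on {0..} q' \<and>
                   (\<forall>x\<ge>0. (q i has_real_derivative q' x) (at x within {0..}))"
    and S_convex: "convex S"
    and S_nonneg: "\<forall>v\<in>S. \<forall>i. v $ i \<ge> 0"
    and s_in: "s \<in> S"
    and stable_unique: "\<exists>!p. stable_equilibrium (field B lam delta q s) p"
    and pos_unique: "\<forall>e>0. \<exists>!p. (\<forall>i. p $ i > 0) \<and> eq_map B (lam + e *\<^sub>R 1) delta q s p = 0"
    and eps_pos: "\<forall>l. eps l > 0"
    and eps_decr: "decseq eps"
    and eps_lim: "eps \<longlonglongrightarrow> 0"
  shows "(\<lambda>l. pbar_eps B lam delta q s (eps l)) \<longlonglongrightarrow> pbar B lam delta q s"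
proof -
  have sn: "\<forall>i. s$i \<ge> 0" using S_nonneg s_in by blast
  interpret sis2 B lam delta s q eps
  proof (unfold_locales)
    show "\<And>i j. 0 \<le> B $ i $ j" using B_nonneg by blast
    show "\<And>i. 0 \<le> lam $ i" using lam_nonneg by blast
    show "\<And>i. 0 < delta $ i" using delta_pos by blast
    show "\<And>i. 0 < q i (s $ i)" using q_range sn by blast
    show "\<And>e. 0 < e \<Longrightarrow> \<exists>!p. (\<forall>i. 0 < p $ i) \<and> eq_map B (lam + e *\<^sub>R 1) delta q s p = 0"
      using pos_unique by blast
    show "\<And>l. 0 < eps l" using eps_pos by blast
    show "decseq eps" by (rule eps_decr)
    show "eps \<longlonglongrightarrow> 0" by (rule eps_lim)
  qed
  have "pbar B lam delta q s = ps" unfolding pbar_def by (rule the1_equality[OF stable_unique ps_stable])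
  moreover have "(\<lambda>l. pbar_eps B lam delta q s (eps l)) = (\<lambda>l. pe (eps l))" by (simp add: pe_def)
  ultimately show ?thesis using ps_lim by simp
qed

end
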